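(* Let $(G,\rho)$ have vertices $v,w$ and edges $a_1,\dots,a_5$, each joining $v$ and $w$, with $\rho_v=(a_1,a_2,a_3,a_4,a_5)$ and $\rho_w=(a_1,a_3,a_2,a_5,a_4)$. Let $(G',\rho')$ have the same vertices $v,w$ and edges $b_1,\dots,b_5$, each joining $v$ and $w$, with $\rho'_v=(b_1,b_4,b_2,b_5,b_3)$ and $\rho'_w=(b_1,b_5,b_3,b_4,b_2)$. Let $\varphi:\mathcal T(G)\to\mathcal T(G')$ send the tree $\{a_i\}$ to $\{b_i\}$, and let $\gamma:\operatorname{Pic}^0(G)\to\operatorname{Pic}^0(G')$ send the class of $n v-n w$ to the class of $2nv-2nw$ (an isomorphism since both groups are $\mathbb Z/5\mathbb Z$). Then for every vertex $u\in\{v,w\}$ and for $\alpha$ either the rotor routing process or the Bernardi process, $\varphi(\alpha_u^{G}(S,T))=\alpha_u^{G'}(\gamma(S),\varphi(T))$ for all $S\in\operatorname{Pic}^0(G)$, $T\in\mathcal T(G)$. However, the genus of $(G,\rho)$ is $1$ while the genus of $(G',\rho')$ is $2$.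
   Context: A ribbon graph $(G,\rho)$ is a finite connected loopless multigraph with, for each vertex $u$, a cyclic order $\rho_u$ on the edges at $u$. $\mathcal T(G)$ is the set of spanning trees (here each single edge). $\operatorname{Pic}^0(G)$ is the group of degree-zero integer chip configurations modulo firings (firing $u$ sends one chip from $u$ along each incident edge); $\operatorname{Pic}^k$ likewise for degree $k$. Rotor routing torsor $r_u$: for $S\in\operatorname{Pic}^0$, $T\in\mathcal T$, take a representative of $S$ nonnegative away from $u$; orient $T$ towards $u$, giving each other vertex an outgoing edge (rotor); while some vertex $x\ne u$ has positive chips, advance its rotor to the next edge in $\rho_x$ and send a chip along it; when all vertices other than $u$ have zero chips, the rotors form $r_u(S,T)$. Bernardi torsor $\beta_u$: with half-edges $(e,x)$, for $T$ start at $(e_0,u)$ for a fixed edge $e_0$ at $u$; at $(e',x')$: if $e'\in T$ with other endpoint $y$, move to $(e'',y)$ with $e''$ following $e'$ in $\rho_y$; if $e'\notin T$, move to $(\tilde e,x')$ with $\tilde e$ following $e'$ in $\rho_{x'}$ and place a chip on $x'$ if the other half-edge of $e'$ has not yet been visited. Stop on returning to $(e_0,u)$. The divisors $D_T$ (degree $|E|-|V|+1$) give a bijection of $\mathcal T$ with $\operatorname{Pic}^{|E|-|V|+1}$, and $\beta_u(S,T)$ is the unique $T'$ with $[D_{T'}]=[D_T]+S$. Genus: a cycle is a closed walk which, entering a vertex $x$ along $e$, leaves along the edge following $e$ in $\rho_x$; the genus $g$ satisfies $2g=2-|V|+|E|-\operatorname{cyc}(G,\rho)$, where $\operatorname{cyc}$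 is the number of cycles. *)

theory Defs
  imports Main
begin

text \<open>A ribbon graph: vertex set, edge set, endpoints of each edge (a two-element
set, the graph being loopless), and for each vertex the cyclic order of the
edges at it, given as a list read cyclically.\<close>

record ('v, 'e) ribbon =
  verts :: "'v set"
  edges :: "'e set"
  ends  :: "'e \<Rightarrow> 'v set"
  rho   :: "'v \<Rightarrow> 'e list"

definition nxt :: "('v, 'e) ribbon \<Rightarrow> 'v \<Rightarrow> 'e \<Rightarrow> 'e" where
  "nxt G x e = (let l = rho G x; i = (LEAST i. i < length l \<and> l ! i = e)
                in l ! (Suc i mod length l))"

definition other :: "('v, 'e) ribbon \<Rightarrow> 'v \<Rightarrow> 'e \<Rightarrow> 'v" where
  "other G x e = (THE y. ends G e = {x, y})"

definition spanning_trees :: "('v, 'e) ribbon \<Rightarrow> 'e set set" where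
  "spanning_trees G = {T. T \<subseteq> edges G \<and> card T + 1 = card (verts G) \<and>
      (\<forall>x\<in>verts G. \<forall>y\<in>verts G.
          (x, y) \<in> {(a, b). \<exists>e\<in>T. ends G e = {a, b}}\<^sup>*)}"

text \<open>Chip configurations are functions 'v => int (only values on the vertex set
matter). Linear equivalence: differing by a sequence of firings, i.e. by an
integer combination f of firing vectors.\<close>
definition lin_equiv :: "('v, 'e) ribbon \<Rightarrow> ('v \<Rightarrow> int) \<Rightarrow> ('v \<Rightarrow> int) \<Rightarrow> bool" where
  "lin_equiv G D D' \<longleftrightarrow> (\<exists>f :: 'v \<Rightarrow> int. \<forall>y\<in>verts G.
      D' y = D y + (\<Sum>e\<in>{e\<in>edges G. y \<in> ends G e}. f (other G y e) - f y))"

text \<open>r is the orientation of tree T towards u: every vertex x other than u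
gets an outgoing tree edge r x, and following these edges leads to u.\<close>
definition tree_rotors :: "('v, 'e) ribbon \<Rightarrow> 'v \<Rightarrow> 'e set \<Rightarrow> ('v \<Rightarrow> 'e) \<Rightarrow> bool" where
  "tree_rotors G u T r \<longleftrightarrow>
     (\<forall>x\<in>verts G - {u}. r x \<in> T \<and> x \<in> ends G (r x) \<and>
        (\<exists>k. ((\<lambda>z. other G z (r z)) ^^ k) x = u))"

definition rr_step :: "('v, 'e) ribbon \<Rightarrow> 'v \<Rightarrow> ('v \<Rightarrow> int) \<times> ('v \<Rightarrow> 'e)
                        \<Rightarrow> ('v \<Rightarrow> int) \<times> ('v \<Rightarrow> 'e) \<Rightarrow> bool" where
  "rr_step G u s s' \<longleftrightarrow> (\<exists>x\<in>verts G - {u}. fst s x > 0 \<and>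
      snd s' = (snd s)(x := nxt G x (snd s x)) \<and>
      fst s' = (\<lambda>z. fst s z - (if z = x then 1 else 0)
                     + (if z = other G x (snd s' x) then 1 else 0)))"

text \<open>The rotor routing torsor r_u(S,T), S given by any representative D.\<close>
definition rotor_route :: "('v, 'e) ribbon \<Rightarrow> 'v \<Rightarrow> ('v \<Rightarrow> int) \<Rightarrow> 'e set \<Rightarrow> 'e set" where
  "rotor_route G u D T = (THE T'. \<exists>D' r D'' r'.
      lin_equiv G D D' \<and> (\<forall>x\<in>verts G - {u}. D' x \<ge> 0) \<and>
      tree_rotors G u T r \<and>
      (rr_step G u)\<^sup>*\<^sup>* (D', r) (D'', r') \<and>
      (\<forall>x\<in>verts G - {u}. D'' x = 0) \<and>
      T' = r' ` (verts G - {u}))"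

definition bern_step :: "('v, 'e) ribbon \<Rightarrow> 'e set \<Rightarrow> 'e \<times> 'v \<Rightarrow> 'e \<times> 'v" where
  "bern_step G T h = (let e = fst h; x = snd h in
      if e \<in> T then (let y = other G x e in (nxt G y e, y)) else (nxt G x e, x))"

definition bern_tour :: "('v, 'e) ribbon \<Rightarrow> 'v \<Rightarrow> 'e \<Rightarrow> 'e set \<Rightarrow> nat \<Rightarrow> 'e \<times> 'v" where
  "bern_tour G u e0 T k = (bern_step G T ^^ k) (e0, u)"

definition bern_len :: "('v, 'e) ribbon \<Rightarrow> 'v \<Rightarrow> 'e \<Rightarrow> 'e set \<Rightarrow> nat" where
  "bern_len G u e0 T = (LEAST n. 0 < n \<and> bern_tour G u e0 T n = (e0, u))"

definition bern_div :: "('v, 'e) ribbon \<Rightarrow> 'v \<Rightarrow> 'e \<Rightarrow> 'e set \<Rightarrow> 'v \<Rightarrow> int" where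
  "bern_div G u e0 T x = int (card {k. k < bern_len G u e0 T \<and>
      snd (bern_tour G u e0 T k) = x \<and> fst (bern_tour G u e0 T k) \<notin> T \<and>
      (fst (bern_tour G u e0 T k), other G x (fst (bern_tour G u e0 T k)))
         \<notin> bern_tour G u e0 T ` {..<k}})"

text \<open>The Bernardi torsor beta_u(S,T) (with base edge e0 at u), S given by a representative D.\<close>
definition bernardi :: "('v, 'e) ribbon \<Rightarrow> 'v \<Rightarrow> 'e \<Rightarrow> ('v \<Rightarrow> int) \<Rightarrow> 'e set \<Rightarrow> 'e set" where
  "bernardi G u e0 D T = (THE T'. T' \<in> spanning_trees G \<and>
      lin_equiv G (bern_div G u e0 T') (\<lambda>z. bern_div G u e0 T z + D z))"

definition half_edges :: "('v, 'e) ribbon \<Rightarrow> ('e \<times> 'v) set" where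
  "half_edges G = {(e, x). e \<in> edges G \<and> x \<in> ends G e}"

text \<open>Half-edge (e,x): leaving x along e; arriving at y, leave along the next edge at y.\<close>
definition face_step :: "('v, 'e) ribbon \<Rightarrow> 'e \<times> 'v \<Rightarrow> 'e \<times> 'v" where
  "face_step G h = (let y = other G (snd h) (fst h) in (nxt G y (fst h), y))"

definition cyc :: "('v, 'e) ribbon \<Rightarrow> nat" where
  "cyc G = card ((\<lambda>h. range (\<lambda>k. (face_step G ^^ k) h)) ` half_edges G)"

definition genus :: "('v, 'e) ribbon \<Rightarrow> int" where
  "genus G = (2 - int (card (verts G)) + int (card (edges G)) - int (cyc G)) div 2"

datatype vtx = Vv | Vw
datatype aedge = A nat
datatype bedge = B nat

definition G0 :: "(vtx, aedge) ribbon" where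
  "G0 = \<lparr> verts = {Vv, Vw}, edges = A ` {1..5}, ends = (\<lambda>_. {Vv, Vw}),
          rho = (\<lambda>x. if x = Vv then [A 1, A 2, A 3, A 4, A 5]
                               else [A 1, A 3, A 2, A 5, A 4]) \<rparr>"

definition G1 :: "(vtx, bedge) ribbon" where
  "G1 = \<lparr> verts = {Vv, Vw}, edges = B ` {1..5}, ends = (\<lambda>_. {Vv, Vw}),
          rho = (\<lambda>x. if x = Vv then [B 1, B 4, B 2, B 5, B 3]
                               else [B 1, B 5, B 3, B 4, B 2]) \<rparr>"

definition phi :: "aedge set \<Rightarrow> bedge set" where
  "phi T = (\<lambda>e. case e of A i \<Rightarrow> B i) ` T"

definition dvw :: "int \<Rightarrow> vtx \<Rightarrow> int" where
  "dvw n = (\<lambda>z. if z = Vv then n else -n)"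

end

theory Submission
  imports Defs
begin

lemma nxt_eq:
  assumes "rho G x = l" "distinct l" "i < length l" "l ! i = e"
  shows "nxt G x e = l ! (Suc i mod length l)"
proof -
  have "(LEAST j. j < length l \<and> l ! j = e) = i"
    apply (rule Least_equality)
    using assms apply simp
    using assms by (metis nth_eq_iff_index_eq order_refl)
  then show ?thesis unfolding nxt_def using assms(1) by simp
qed

lemma nxt_G0_v_1 [simp]: "nxt G0 Vv (A (Suc 0)) = A 2"
  using nxt_eq[of G0 Vv "[A 1, A 2, A 3, A 4, A 5]" 0 "A 1"] by (simp add: G0_def)

lemma nxt_G0_v_2 [simp]: "nxt G0 Vv (A 2) = A 3"
  using nxt_eq[of G0 Vv "[A 1, A 2, A 3, A 4, A 5]" 1 "A 2"] by (simp add: G0_def)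

lemma nxt_G0_v_3 [simp]: "nxt G0 Vv (A 3) = A 4"
  using nxt_eq[of G0 Vv "[A 1, A 2, A 3, A 4, A 5]" 2 "A 3"] by (simp add: G0_def)

lemma nxt_G0_v_4 [simp]: "nxt G0 Vv (A 4) = A 5"
  using nxt_eq[of G0 Vv "[A 1, A 2, A 3, A 4, A 5]" 3 "A 4"] by (simp add: G0_def)

lemma nxt_G0_v_5 [simp]: "nxt G0 Vv (A 5) = A (Suc 0)"
  using nxt_eq[of G0 Vv "[A 1, A 2, A 3, A 4, A 5]" 4 "A 5"] by (simp add: G0_def)

lemma nxt_G0_w_1 [simp]: "nxt G0 Vw (A (Suc 0)) = A 3"
  using nxt_eq[of G0 Vw "[A 1, A 3, A 2, A 5, A 4]" 0 "A 1"] by (simp add: G0_def)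

lemma nxt_G0_w_3 [simp]: "nxt G0 Vw (A 3) = A 2"
  using nxt_eq[of G0 Vw "[A 1, A 3, A 2, A 5, A 4]" 1 "A 3"] by (simp add: G0_def)

lemma nxt_G0_w_2 [simp]: "nxt G0 Vw (A 2) = A 5"
  using nxt_eq[of G0 Vw "[A 1, A 3, A 2, A 5, A 4]" 2 "A 2"] by (simp add: G0_def)

lemma nxt_G0_w_5 [simp]: "nxt G0 Vw (A 5) = A 4"
  using nxt_eq[of G0 Vw "[A 1, A 3, A 2, A 5, A 4]" 3 "A 5"] by (simp add: G0_def)

lemma nxt_G0_w_4 [simp]: "nxt G0 Vw (A 4) = A (Suc 0)"
  using nxt_eq[of G0 Vw "[A 1, A 3, A 2, A 5, A 4]" 4 "A 4"] by (simp add: G0_def)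

lemma nxt_G1_v_1 [simp]: "nxt G1 Vv (B (Suc 0)) = B 4"
  using nxt_eq[of G1 Vv "[B 1, B 4, B 2, B 5, B 3]" 0 "B 1"] by (simp add: G1_def)

lemma nxt_G1_v_4 [simp]: "nxt G1 Vv (B 4) = B 2"
  using nxt_eq[of G1 Vv "[B 1, B 4, B 2, B 5, B 3]" 1 "B 4"] by (simp add: G1_def)

lemma nxt_G1_v_2 [simp]: "nxt G1 Vv (B 2) = B 5"
  using nxt_eq[of G1 Vv "[B 1, B 4, B 2, B 5, B 3]" 2 "B 2"] by (simp add: G1_def)

lemma nxt_G1_v_5 [simp]: "nxt G1 Vv (B 5) = B 3"
  using nxt_eq[of G1 Vv "[B 1, B 4, B 2, B 5, B 3]" 3 "B 5"] by (simp add: G1_def)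

lemma nxt_G1_v_3 [simp]: "nxt G1 Vv (B 3) = B (Suc 0)"
  using nxt_eq[of G1 Vv "[B 1, B 4, B 2, B 5, B 3]" 4 "B 3"] by (simp add: G1_def)

lemma nxt_G1_w_1 [simp]: "nxt G1 Vw (B (Suc 0)) = B 5"
  using nxt_eq[of G1 Vw "[B 1, B 5, B 3, B 4, B 2]" 0 "B 1"] by (simp add: G1_def)

lemma nxt_G1_w_5 [simp]: "nxt G1 Vw (B 5) = B 3"
  using nxt_eq[of G1 Vw "[B 1, B 5, B 3, B 4, B 2]" 1 "B 5"] by (simp add: G1_def)

lemma nxt_G1_w_3 [simp]: "nxt G1 Vw (B 3) = B 4"
  using nxt_eq[of G1 Vw "[B 1, B 5, B 3, B 4, B 2]" 2 "B 3"] by (simp add: G1_def)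

lemma nxt_G1_w_4 [simp]: "nxt G1 Vw (B 4) = B 2"
  using nxt_eq[of G1 Vw "[B 1, B 5, B 3, B 4, B 2]" 3 "B 4"] by (simp add: G1_def)

lemma nxt_G1_w_2 [simp]: "nxt G1 Vw (B 2) = B (Suc 0)"
  using nxt_eq[of G1 Vw "[B 1, B 5, B 3, B 4, B 2]" 4 "B 2"] by (simp add: G1_def)

fun itl :: "('a \<Rightarrow> 'a) \<Rightarrow> 'a \<Rightarrow> nat \<Rightarrow> 'a list" where
  "itl f h 0 = []"
| "itl f h (Suc n) = h # itl f (f h) n"

lemma itl_numeral [simp]: "itl f h (numeral m) = h # itl f (f h) (pred_numeral m)"
  by (simp add: numeral_eq_Suc)

lemma itl_len [simp]: "length (itl f h n) = n"
  by (induction n arbitrary: h) auto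

lemma itl_nth: "k < n \<Longrightarrow> itl f h n ! k = (f^^k) h"
proof (induction n arbitrary: h k)
  case 0 then show ?case by simp
next
  case (Suc n)
  then show ?case by (cases k) (auto simp: funpow_swap1)
qed

lemma itl_map: "itl f h n = map (\<lambda>k. (f^^k) h) [0..<n]"
  by (rule nth_equalityI) (auto simp: itl_nth)

lemma other_two:
  assumes "ends G e = {Vv, Vw}"
  shows "other G x e = (if x = Vv then Vw else Vv)"
  unfolding other_def assms
  by (rule the_equality) (cases x; auto simp: doubleton_eq_iff)+

lemma other_G0 [simp]: "other G0 x e = (if x = Vv then Vw else Vv)"
  by (rule other_two) (simp add: G0_def)
lemma other_G1 [simp]: "other G1 x e = (if x = Vv then Vw else Vv)"
  by (rule other_two) (simp add: G1_def)

lemma bern_step_simp [simp]: "bern_step G T (e,x) =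
  (if e \<in> T then (nxt G (other G x e) e, other G x e) else (nxt G x e, x))"
  by (simp add: bern_step_def Let_def)

lemma bern_len_comp:
  assumes "last (itl (bern_step G T) (e0,u) (Suc n)) = (e0,u)"
    "(e0,u) \<notin> set (tl (itl (bern_step G T) (e0,u) n))" "0 < n"
  shows "bern_len G u e0 T = n"
  unfolding bern_len_def
proof (rule Least_equality)
  show "0 < n \<and> bern_tour G u e0 T n = (e0, u)"
    using assms(1,3) by (simp add: itl_map bern_tour_def)
next
  fix m assume m: "0 < m \<and> bern_tour G u e0 T m = (e0, u)"
  show "n \<le> m"
  proof (rule ccontr)
    assume "\<not> n \<le> m"
    have "tl (itl (bern_step G T) (e0,u) n) = map (bern_tour G u e0 T) [Suc 0..<n]"
      by (simp add: itl_map bern_tour_def map_tl[symmetric] tl_upt)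
    moreover have "m \<in> {Suc 0..<n}" using m \<open>\<not> n \<le> m\<close> by auto
    ultimately have "bern_tour G u e0 T m \<in> set (tl (itl (bern_step G T) (e0,u) n))"
      by simp
    then show False using m assms(2) by simp
  qed
qed

lemma bern_div_comp:
  assumes "last (itl (bern_step G T) (e0,u) (Suc n)) = (e0,u)"
    "(e0,u) \<notin> set (tl (itl (bern_step G T) (e0,u) n))" "0 < n"
  shows "bern_div G u e0 T x = int (length (filter (\<lambda>k.
     snd (itl (bern_step G T) (e0,u) n ! k) = x \<and> fst (itl (bern_step G T) (e0,u) n ! k) \<notin> T \<and>
     (fst (itl (bern_step G T) (e0,u) n ! k), other G x (fst (itl (bern_step G T) (e0,u) n ! k)))
       \<notin> set (take k (itl (bern_step G T) (e0,u) n))) [0..<n]))"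
proof -
  have L: "bern_len G u e0 T = n" by (rule bern_len_comp[OF assms])
  let ?L = "itl (bern_step G T) (e0,u) n"
  let ?P = "\<lambda>k. snd (bern_tour G u e0 T k) = x \<and> fst (bern_tour G u e0 T k) \<notin> T \<and>
      (fst (bern_tour G u e0 T k), other G x (fst (bern_tour G u e0 T k)))
         \<notin> bern_tour G u e0 T ` {..<k}"
  have "filter (\<lambda>k.
     snd (?L ! k) = x \<and> fst (?L ! k) \<notin> T \<and>
     (fst (?L ! k), other G x (fst (?L ! k))) \<notin> set (take k ?L)) [0..<n] = filter ?P [0..<n]"
  proof (rule filter_cong)
    fix k assume "k \<in> set [0..<n]"
    then have k: "k < n" by simp
    have "take k ?L = map (bern_tour G u e0 T) [0..<k]"
      using k by (simp add: itl_map bern_tour_def take_map min_def)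
    then show "(snd (?L ! k) = x \<and> fst (?L ! k) \<notin> T \<and>
     (fst (?L ! k), other G x (fst (?L ! k))) \<notin> set (take k ?L)) = ?P k"
      using k by (simp add: itl_map bern_tour_def atLeast0LessThan)
  qed simp
  moreover have "length (filter ?P [0..<n]) = card {k. k < n \<and> ?P k}"
    unfolding length_filter_conv_card by (rule arg_cong[where f=card]) auto
  ultimately show ?thesis unfolding bern_div_def L by simp
qed




lemma bern_div10:
  assumes "last (itl (bern_step G T) (e0,u) 11) = (e0,u)"
    "(e0,u) \<notin> set (tl (itl (bern_step G T) (e0,u) 10))"
  shows "bern_div G u e0 T x = int (length (filter (\<lambda>k.
     snd (itl (bern_step G T) (e0,u) 10 ! k) = x \<and> fst (itl (bern_step G T) (e0,u) 10 ! k) \<notin> T \<and>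
     (fst (itl (bern_step G T) (e0,u) 10 ! k), other G x (fst (itl (bern_step G T) (e0,u) 10 ! k)))
       \<notin> set (take k (itl (bern_step G T) (e0,u) 10))) [0..<10]))"
  by (rule bern_div_comp) (use assms in auto)

definition two :: "(vtx, 'e) ribbon \<Rightarrow> (nat \<Rightarrow> 'e) \<Rightarrow> bool" where
  "two G X \<longleftrightarrow> verts G = {Vv, Vw} \<and> edges G = X ` {1..5} \<and> ends G = (\<lambda>_. {Vv, Vw}) \<and> inj X"

lemma two_G0: "two G0 A" by (simp add: two_def G0_def inj_def)
lemma two_G1: "two G1 B" by (simp add: two_def G1_def inj_def)

lemma two_card: "two G X \<Longrightarrow> card (edges G) = 5"
  unfolding two_def by (simp add: card_image inj_on_def inj_def)

lemma two_other: "two G X \<Longrightarrow> other G y e = (if y = Vv then Vw else Vv)"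
  by (rule other_two) (simp add: two_def)

lemma lin_equiv_two:
  assumes "two G X"
  shows "lin_equiv G D D' \<longleftrightarrow> (\<exists>k. D' Vv = D Vv + 5*k \<and> D' Vw = D Vw - 5*k)"
proof -
  have E: "{e\<in>edges G. y \<in> ends G e} = edges G" if "y \<in> {Vv,Vw}" for y
    using assms that by (auto simp: two_def)
  have S: "(\<Sum>e\<in>{e\<in>edges G. y \<in> ends G e}. f (other G y e) - f y) = 5 * (f (if y = Vv then Vw else Vv) - f y)"
    if "y \<in> {Vv,Vw}" for y and f :: "vtx \<Rightarrow> int"
    using E[OF that] two_other[OF assms] two_card[OF assms] by simp
  have V: "verts G = {Vv, Vw}" using assms by (simp add: two_def)
  show ?thesis
  proof
    assume "lin_equiv G D D'"
    then obtain f :: "vtx \<Rightarrow> int" where f: "\<forall>y\<in>verts G.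
      D' y = D y + (\<Sum>e\<in>{e\<in>edges G. y \<in> ends G e}. f (other G y e) - f y)"
      unfolding lin_equiv_def by blast
    show "\<exists>k. D' Vv = D Vv + 5*k \<and> D' Vw = D Vw - 5*k"
      using f S V by (intro exI[of _ "f Vw - f Vv"]) auto
  next
    assume "\<exists>k. D' Vv = D Vv + 5*k \<and> D' Vw = D Vw - 5*k"
    then obtain k where k: "D' Vv = D Vv + 5*k" "D' Vw = D Vw - 5*k" by blast
    show "lin_equiv G D D'"
      unfolding lin_equiv_def
      using k S[of Vv "\<lambda>z. if z = Vw then k else 0"] S[of Vw "\<lambda>z. if z = Vw then k else 0"] V
      by (intro exI[of _ "\<lambda>z. if z = Vw then k else 0"]) auto
  qed
qed

lemma lin_equiv_two':
  assumes "two G X" "{x, u} = {Vv, Vw}" "x \<noteq> u"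
  shows "lin_equiv G D D' \<longleftrightarrow> (\<exists>k. D' x = D x + 5*k \<and> D' u = D u - 5*k)"
proof -
  have "x = Vv \<and> u = Vw \<or> x = Vw \<and> u = Vv" using assms(2,3) by (auto simp: doubleton_eq_iff)
  then show ?thesis
  proof
    assume "x = Vv \<and> u = Vw" then show ?thesis using lin_equiv_two[OF assms(1)] by simp
  next
    assume "x = Vw \<and> u = Vv"
    then show ?thesis using lin_equiv_two[OF assms(1)]
      by (metis (no_types, opaque_lifting) add.commute add_uminus_conv_diff diff_minus_eq_add mult_minus_right)
  qed
qed

lemma spanning_two:
  assumes "two G X"
  shows "spanning_trees G = {{X j} | j. j \<in> {1..5}}"
proof
  show "spanning_trees G \<subseteq> {{X j} | j. j \<in> {1..5}}"
  proof
    fix T assume "T \<in> spanning_trees G"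
    then have T: "T \<subseteq> X ` {1..5}" "card T = 1"
      using assms by (auto simp: spanning_trees_def two_def)
    then obtain e where "T = {e}" by (meson card_1_singletonE)
    then show "T \<in> {{X j} | j. j \<in> {1..5}}" using T by auto
  qed
next
  show "{{X j} | j. j \<in> {1..5}} \<subseteq> spanning_trees G"
  proof clarify
    fix j :: nat assume j: "j \<in> {1..5}"
    have "(x, y) \<in> {(a, b). \<exists>e\<in>{X j}. ends G e = {a, b}}\<^sup>*" if "x \<in> {Vv,Vw}" "y \<in> {Vv,Vw}" for x y
    proof (cases "x = y")
      case True then show ?thesis by simp
    next
      case False
      then have "(x, y) \<in> {(a, b). \<exists>e\<in>{X j}. ends G e = {a, b}}"
        using that assms by (auto simp: two_def)
      then show ?thesis by blast
    qed
    then show "{X j} \<in> spanning_trees G"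
      using assms j by (auto simp: spanning_trees_def two_def)
  qed
qed

lemma funpow_period: "(f^^p) e = e \<Longrightarrow> (f^^(p*q)) e = e"
  by (induction q) (simp_all add: funpow_add)

lemma funpow_mod: "(f^^p) e = e \<Longrightarrow> (f^^j) e = (f^^(j mod p)) e"
proof -
  assume a: "(f^^p) e = e"
  have "(f^^j) e = (f^^(j mod p + p*(j div p))) e" by simp
  also have "\<dots> = (f^^(j mod p)) ((f^^(p*(j div p))) e)" by (simp only: funpow_add comp_apply)
  also have "\<dots> = (f^^(j mod p)) e" using funpow_period[OF a] by simp
  finally show ?thesis .
qed

lemma rr_chain:
  assumes "two G X" "u \<in> {Vv, Vw}" "x = (if u = Vv then Vw else Vv)"
  shows "D x = int m \<Longrightarrow> (rr_step G u)\<^sup>*\<^sup>* (D, r)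
     (\<lambda>z. if z = x then 0 else if z = u then D u + int m else D z, r(x := (nxt G x ^^ m) (r x)))"
proof (induction m arbitrary: D r)
  case 0
  have "(\<lambda>z. if z = x then 0 else if z = u then D u + int 0 else D z) = D" using 0 by auto
  moreover have "r(x := (nxt G x ^^ 0) (r x)) = r" by simp
  ultimately show ?case by simp
next
  case (Suc m)
  define D1 where "D1 = (\<lambda>z. D z - (if z = x then 1 else 0) + (if z = u then 1 else 0))"
  define r1 where "r1 = r(x := nxt G x (r x))"
  have xu: "x \<noteq> u" "x \<in> verts G" using assms by (auto simp: two_def)
  have ou: "other G x (r1 x) = u" using two_other[OF assms(1)] assms(2,3) by auto
  have step: "rr_step G u (D, r) (D1, r1)"
    unfolding rr_step_def fst_conv snd_conv
  proof (rule bexI[of _ x])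
    show "x \<in> verts G - {u}" using xu by simp
    show "0 < D x \<and> r1 = r(x := nxt G x (r x)) \<and>
      D1 = (\<lambda>z. D z - (if z = x then 1 else 0) + (if z = other G x (r1 x) then 1 else 0))"
      using Suc.prems ou by (simp add: D1_def r1_def)
  qed
  have "D1 x = int m" using Suc.prems xu by (simp add: D1_def)
  from Suc.IH[where D=D1 and r=r1, OF this] have ch: "(rr_step G u)\<^sup>*\<^sup>* (D1, r1)
     (\<lambda>z. if z = x then 0 else if z = u then D1 u + int m else D1 z, r1(x := (nxt G x ^^ m) (r1 x)))" .
  have e1: "(\<lambda>z. if z = x then 0 else if z = u then D1 u + int m else D1 z) =
     (\<lambda>z. if z = x then 0 else if z = u then D u + int (Suc m) else D z)"
    using xu by (intro ext) (simp add: D1_def)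
  have e2: "r1(x := (nxt G x ^^ m) (r1 x)) = r(x := (nxt G x ^^ Suc m) (r x))"
    by (simp add: r1_def funpow_swap1)
  show ?case
    by (rule converse_rtranclp_into_rtranclp[where r="rr_step G u", OF step]) (use ch in \<open>simp only: e1 e2\<close>)
qed

lemma rr_inv:
  assumes "two G X" "u \<in> {Vv, Vw}" "x = (if u = Vv then Vw else Vv)"
  shows "(rr_step G u)\<^sup>*\<^sup>* s0 s \<Longrightarrow> \<exists>j. fst s x = fst s0 x - int j \<and> snd s x = (nxt G x ^^ j) (snd s0 x)"
proof (induction rule: rtranclp_induct)
  case base
  then show ?case by (intro exI[of _ 0]) simp
next
  case (step s s')
  then obtain j where j: "fst s x = fst s0 x - int j" "snd s x = (nxt G x ^^ j) (snd s0 x)" by blast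
  have V: "verts G - {u} = {x}" using assms by (auto simp: two_def)
  have xu: "x \<noteq> u" using assms by auto
  from step(2) obtain y where y: "y \<in> verts G - {u}"
    and sn: "snd s' = (snd s)(y := nxt G y (snd s y))"
    and fs: "fst s' = (\<lambda>z. fst s z - (if z = y then 1 else 0) + (if z = other G y (snd s' y) then 1 else 0))"
    unfolding rr_step_def by blast
  have yx: "y = x" using y V by blast
  have ou: "other G y (snd s' y) = u" using two_other[OF assms(1)] assms(2,3) yx by auto
  have "fst s' x = fst s x - 1" using fs ou xu yx by simp
  moreover have "snd s' x = nxt G x (snd s x)" using sn yx by simp
  ultimately show ?case using j by (intro exI[of _ "Suc j"]) auto
qed

lemma rotor_two:
  assumes "two G X" "u \<in> {Vv, Vw}" "x = (if u = Vv then Vw else Vv)" "j \<in> {1..5}"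
    "(nxt G x ^^ 5) (X j) = X j"
  shows "rotor_route G u D {X j} = {(nxt G x ^^ nat (D x mod 5)) (X j)}"
proof -
  let ?e = "X j"
  let ?t = "(nxt G x ^^ nat (D x mod 5)) ?e"
  have V: "verts G - {u} = {x}" using assms by (auto simp: two_def)
  have xu: "x \<noteq> u" "{x, u} = {Vv, Vw}" using assms by auto
  have TR: "tree_rotors G u {?e} r \<longleftrightarrow> r x = ?e" for r
  proof
    assume "tree_rotors G u {?e} r" then show "r x = ?e" unfolding tree_rotors_def V by auto
  next
    assume "r x = ?e"
    then show "tree_rotors G u {?e} r" unfolding tree_rotors_def V
      using assms two_other[OF assms(1)] by (intro ballI conjI exI[of _ 1]) (auto simp: two_def)
  qed
  let ?P = "\<lambda>T'. \<exists>D' r D'' r'.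
      lin_equiv G D D' \<and> (\<forall>x\<in>verts G - {u}. D' x \<ge> 0) \<and>
      tree_rotors G u {?e} r \<and>
      (rr_step G u)\<^sup>*\<^sup>* (D', r) (D'', r') \<and>
      (\<forall>x\<in>verts G - {u}. D'' x = 0) \<and>
      T' = r' ` (verts G - {u})"
  have "?P {?t}"
  proof -
    define D' where "D' = (\<lambda>z. if z = x then D x mod 5 else D z + (D x - D x mod 5))"
    have le: "lin_equiv G D D'"
      unfolding lin_equiv_two'[OF assms(1) xu(2) xu(1)]
    proof (intro exI[of _ "- (D x div 5)"] conjI)
      have m: "D x mod 5 = D x - 5 * (D x div 5)" using minus_mult_div_eq_mod[of "D x" 5] by simp
      show "D' x = D x + 5 * - (D x div 5)" using m by (simp add: D'_def)
      show "D' u = D u - 5 * - (D x div 5)" using m xu by (simp add: D'_def)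
    qed
    have D'x: "D' x = int (nat (D x mod 5))" by (simp add: D'_def)
    define D'' where "D'' = (\<lambda>z. if z = x then 0 else if z = u then D' u + int (nat (D x mod 5)) else D' z)"
    have ch: "(rr_step G u)\<^sup>*\<^sup>* (D', \<lambda>_. ?e) (D'', (\<lambda>_. ?e)(x := ?t))"
      using rr_chain[where D=D' and m="nat (D x mod 5)" and r="\<lambda>_. X j", OF assms(1-3) D'x]
      by (simp add: D''_def)
    have c2: "\<forall>y\<in>verts G - {u}. D' y \<ge> 0" using V by (simp add: D'_def)
    have c3: "tree_rotors G u {?e} (\<lambda>_. ?e)" using TR by simp
    have c5: "\<forall>y\<in>verts G - {u}. D'' y = 0" using V by (simp add: D''_def)
    have c6: "{?t} = ((\<lambda>_. ?e)(x := ?t)) ` (verts G - {u})" using V by simp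
    show ?thesis
      apply (rule exI[of _ D'], rule exI[of _ "\<lambda>_. ?e"], rule exI[of _ D''], rule exI[of _ "(\<lambda>_. ?e)(x := ?t)"])
      using le c2 c3 ch c5 c6 by (intro conjI)
  qed
  moreover have "T' = {?t}" if "?P T'" for T'
  proof -
    obtain D' r D'' r' where h: "lin_equiv G D D'" "(\<forall>x\<in>verts G - {u}. D' x \<ge> 0)"
      "tree_rotors G u {?e} r" "(rr_step G u)\<^sup>*\<^sup>* (D', r) (D'', r')"
      "(\<forall>x\<in>verts G - {u}. D'' x = 0)" "T' = r' ` (verts G - {u})"
      using \<open>?P T'\<close> by blast
    obtain k where k: "D' x = D x + 5*k" using h(1) lin_equiv_two'[OF assms(1) xu(2) xu(1)] by blast
    have rx: "r x = ?e" using h(3) TR by blast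
    obtain i where i: "D'' x = D' x - int i" "r' x = (nxt G x ^^ i) (r x)"
      using rr_inv[OF assms(1-3) h(4)] by auto
    have "D'' x = 0" using h(5) V by auto
    then have "int i = D x + 5*k" using i k by simp
    then have "int i mod 5 = D x mod 5" by simp
    then have "int (i mod 5) = D x mod 5" by (simp add: zmod_int)
    then have im: "i mod 5 = nat (D x mod 5)" by linarith
    have "r' x = (nxt G x ^^ (i mod 5)) ?e" using i(2) rx funpow_mod[OF assms(5)] by simp
    then have "r' x = ?t" using im by simp
    then show ?thesis using h(6) V by simp
  qed
  ultimately show ?thesis unfolding rotor_route_def by (rule the_equality)
qed


lemma ball15: "(\<forall>j\<in>{1..5::nat}. P j) \<longleftrightarrow> P 1 \<and> P 2 \<and> P 3 \<and> P 4 \<and> P 5"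
proof -
  have "{1..5::nat} = {1,2,3,4,5}" by auto
  then show ?thesis by simp
qed

lemma in15: "j \<in> {1..5::nat} \<longleftrightarrow> j = 1 \<or> j = 2 \<or> j = 3 \<or> j = 4 \<or> j = 5"
  by auto

definition c0 :: "vtx \<Rightarrow> nat \<Rightarrow> int" where
  "c0 u j = (if u = Vv then [0,1,2,3,4] else [4,2,3,0,1]) ! (j - 1)"
definition c1 :: "vtx \<Rightarrow> nat \<Rightarrow> int" where
  "c1 u j = (if u = Vv then [0,2,4,1,3] else [4,0,2,1,3]) ! (j - 1)"

lemma edges_G0: "e0 \<in> edges G0 \<longleftrightarrow> e0 = A 1 \<or> e0 = A 2 \<or> e0 = A 3 \<or> e0 = A 4 \<or> e0 = A 5"
  by (auto simp: G0_def)
lemma edges_G1: "e0 \<in> edges G1 \<longleftrightarrow> e0 = B 1 \<or> e0 = B 2 \<or> e0 = B 3 \<or> e0 = B 4 \<or> e0 = B 5"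
  by (auto simp: G1_def)

lemma H_G0_v_1: "\<forall>j\<in>{1..5}. 5 dvd (bern_div G0 Vv (A 1) {A j} Vv - c0 Vv j - (0)) \<and>
   bern_div G0 Vv (A 1) {A j} Vv + bern_div G0 Vv (A 1) {A j} Vw = 4"
  unfolding ball15 by (simp add: bern_div10 upt_rec c0_def)

lemma H_G0_v_2: "\<forall>j\<in>{1..5}. 5 dvd (bern_div G0 Vv (A 2) {A j} Vv - c0 Vv j - (4)) \<and>
   bern_div G0 Vv (A 2) {A j} Vv + bern_div G0 Vv (A 2) {A j} Vw = 4"
  unfolding ball15 by (simp add: bern_div10 upt_rec c0_def)

lemma H_G0_v_3: "\<forall>j\<in>{1..5}. 5 dvd (bern_div G0 Vv (A 3) {A j} Vv - c0 Vv j - (3)) \<and>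
   bern_div G0 Vv (A 3) {A j} Vv + bern_div G0 Vv (A 3) {A j} Vw = 4"
  unfolding ball15 by (simp add: bern_div10 upt_rec c0_def)

lemma H_G0_v_4: "\<forall>j\<in>{1..5}. 5 dvd (bern_div G0 Vv (A 4) {A j} Vv - c0 Vv j - (2)) \<and>
   bern_div G0 Vv (A 4) {A j} Vv + bern_div G0 Vv (A 4) {A j} Vw = 4"
  unfolding ball15 by (simp add: bern_div10 upt_rec c0_def)

lemma H_G0_v_5: "\<forall>j\<in>{1..5}. 5 dvd (bern_div G0 Vv (A 5) {A j} Vv - c0 Vv j - (1)) \<and>
   bern_div G0 Vv (A 5) {A j} Vv + bern_div G0 Vv (A 5) {A j} Vw = 4"
  unfolding ball15 by (simp add: bern_div10 upt_rec c0_def)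

lemma H_G0_v: "e0 \<in> edges G0 \<Longrightarrow> \<exists>s. \<forall>j\<in>{1..5}. 5 dvd (bern_div G0 Vv e0 {A j} Vv - c0 Vv j - s) \<and>
   bern_div G0 Vv e0 {A j} Vv + bern_div G0 Vv e0 {A j} Vw = 4"
  unfolding edges_G0 using H_G0_v_1 H_G0_v_2 H_G0_v_3 H_G0_v_4 H_G0_v_5 by blast

lemma H_G0_w_1: "\<forall>j\<in>{1..5}. 5 dvd (bern_div G0 Vw (A 1) {A j} Vv - c0 Vw j - (0)) \<and>
   bern_div G0 Vw (A 1) {A j} Vv + bern_div G0 Vw (A 1) {A j} Vw = 4"
  unfolding ball15 by (simp add: bern_div10 upt_rec c0_def)

lemma H_G0_w_2: "\<forall>j\<in>{1..5}. 5 dvd (bern_div G0 Vw (A 2) {A j} Vv - c0 Vw j - (-3)) \<and>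
   bern_div G0 Vw (A 2) {A j} Vv + bern_div G0 Vw (A 2) {A j} Vw = 4"
  unfolding ball15 by (simp add: bern_div10 upt_rec c0_def)

lemma H_G0_w_3: "\<forall>j\<in>{1..5}. 5 dvd (bern_div G0 Vw (A 3) {A j} Vv - c0 Vw j - (-4)) \<and>
   bern_div G0 Vw (A 3) {A j} Vv + bern_div G0 Vw (A 3) {A j} Vw = 4"
  unfolding ball15 by (simp add: bern_div10 upt_rec c0_def)

lemma H_G0_w_4: "\<forall>j\<in>{1..5}. 5 dvd (bern_div G0 Vw (A 4) {A j} Vv - c0 Vw j - (-1)) \<and>
   bern_div G0 Vw (A 4) {A j} Vv + bern_div G0 Vw (A 4) {A j} Vw = 4"
  unfolding ball15 by (simp add: bern_div10 upt_rec c0_def)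

lemma H_G0_w_5: "\<forall>j\<in>{1..5}. 5 dvd (bern_div G0 Vw (A 5) {A j} Vv - c0 Vw j - (-2)) \<and>
   bern_div G0 Vw (A 5) {A j} Vv + bern_div G0 Vw (A 5) {A j} Vw = 4"
  unfolding ball15 by (simp add: bern_div10 upt_rec c0_def)

lemma H_G0_w: "e0 \<in> edges G0 \<Longrightarrow> \<exists>s. \<forall>j\<in>{1..5}. 5 dvd (bern_div G0 Vw e0 {A j} Vv - c0 Vw j - s) \<and>
   bern_div G0 Vw e0 {A j} Vv + bern_div G0 Vw e0 {A j} Vw = 4"
  unfolding edges_G0 using H_G0_w_1 H_G0_w_2 H_G0_w_3 H_G0_w_4 H_G0_w_5 by blast

lemma H_G1_v_1: "\<forall>j\<in>{1..5}. 5 dvd (bern_div G1 Vv (B 1) {B j} Vv - c1 Vv j - (0)) \<and>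
   bern_div G1 Vv (B 1) {B j} Vv + bern_div G1 Vv (B 1) {B j} Vw = 4"
  unfolding ball15 by (simp add: bern_div10 upt_rec c1_def)

lemma H_G1_v_2: "\<forall>j\<in>{1..5}. 5 dvd (bern_div G1 Vv (B 2) {B j} Vv - c1 Vv j - (3)) \<and>
   bern_div G1 Vv (B 2) {B j} Vv + bern_div G1 Vv (B 2) {B j} Vw = 4"
  unfolding ball15 by (simp add: bern_div10 upt_rec c1_def)

lemma H_G1_v_3: "\<forall>j\<in>{1..5}. 5 dvd (bern_div G1 Vv (B 3) {B j} Vv - c1 Vv j - (1)) \<and>
   bern_div G1 Vv (B 3) {B j} Vv + bern_div G1 Vv (B 3) {B j} Vw = 4"
  unfolding ball15 by (simp add: bern_div10 upt_rec c1_def)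

lemma H_G1_v_4: "\<forall>j\<in>{1..5}. 5 dvd (bern_div G1 Vv (B 4) {B j} Vv - c1 Vv j - (4)) \<and>
   bern_div G1 Vv (B 4) {B j} Vv + bern_div G1 Vv (B 4) {B j} Vw = 4"
  unfolding ball15 by (simp add: bern_div10 upt_rec c1_def)

lemma H_G1_v_5: "\<forall>j\<in>{1..5}. 5 dvd (bern_div G1 Vv (B 5) {B j} Vv - c1 Vv j - (2)) \<and>
   bern_div G1 Vv (B 5) {B j} Vv + bern_div G1 Vv (B 5) {B j} Vw = 4"
  unfolding ball15 by (simp add: bern_div10 upt_rec c1_def)

lemma H_G1_v: "e0 \<in> edges G1 \<Longrightarrow> \<exists>s. \<forall>j\<in>{1..5}. 5 dvd (bern_div G1 Vv e0 {B j} Vv - c1 Vv j - s) \<and>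
   bern_div G1 Vv e0 {B j} Vv + bern_div G1 Vv e0 {B j} Vw = 4"
  unfolding edges_G1 using H_G1_v_1 H_G1_v_2 H_G1_v_3 H_G1_v_4 H_G1_v_5 by blast

lemma H_G1_w_1: "\<forall>j\<in>{1..5}. 5 dvd (bern_div G1 Vw (B 1) {B j} Vv - c1 Vw j - (0)) \<and>
   bern_div G1 Vw (B 1) {B j} Vv + bern_div G1 Vw (B 1) {B j} Vw = 4"
  unfolding ball15 by (simp add: bern_div10 upt_rec c1_def)

lemma H_G1_w_2: "\<forall>j\<in>{1..5}. 5 dvd (bern_div G1 Vw (B 2) {B j} Vv - c1 Vw j - (-1)) \<and>
   bern_div G1 Vw (B 2) {B j} Vv + bern_div G1 Vw (B 2) {B j} Vw = 4"
  unfolding ball15 by (simp add: bern_div10 upt_rec c1_def)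

lemma H_G1_w_3: "\<forall>j\<in>{1..5}. 5 dvd (bern_div G1 Vw (B 3) {B j} Vv - c1 Vw j - (-3)) \<and>
   bern_div G1 Vw (B 3) {B j} Vv + bern_div G1 Vw (B 3) {B j} Vw = 4"
  unfolding ball15 by (simp add: bern_div10 upt_rec c1_def)

lemma H_G1_w_4: "\<forall>j\<in>{1..5}. 5 dvd (bern_div G1 Vw (B 4) {B j} Vv - c1 Vw j - (-2)) \<and>
   bern_div G1 Vw (B 4) {B j} Vv + bern_div G1 Vw (B 4) {B j} Vw = 4"
  unfolding ball15 by (simp add: bern_div10 upt_rec c1_def)

lemma H_G1_w_5: "\<forall>j\<in>{1..5}. 5 dvd (bern_div G1 Vw (B 5) {B j} Vv - c1 Vw j - (-4)) \<and>
   bern_div G1 Vw (B 5) {B j} Vv + bern_div G1 Vw (B 5) {B j} Vw = 4"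
  unfolding ball15 by (simp add: bern_div10 upt_rec c1_def)

lemma H_G1_w: "e0 \<in> edges G1 \<Longrightarrow> \<exists>s. \<forall>j\<in>{1..5}. 5 dvd (bern_div G1 Vw e0 {B j} Vv - c1 Vw j - s) \<and>
   bern_div G1 Vw e0 {B j} Vv + bern_div G1 Vw e0 {B j} Vw = 4"
  unfolding edges_G1 using H_G1_w_1 H_G1_w_2 H_G1_w_3 H_G1_w_4 H_G1_w_5 by blast


lemma bern_two:
  assumes two: "two G X"
    and H: "\<forall>j\<in>{1..5}. 5 dvd (bern_div G u e0 {X j} Vv - c j - s) \<and>
              bern_div G u e0 {X j} Vv + bern_div G u e0 {X j} Vw = 4"
    and I: "\<forall>j\<in>{1..5}. \<forall>j'\<in>{1..5}. 5 dvd (c j - c j') \<longrightarrow> j = j'"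
    and ij: "i \<in> {1..5}" "j \<in> {1..5}" and d: "5 dvd (c j - c i - n)"
  shows "bernardi G u e0 (dvw n) {X i} = {X j}"
proof -
  have LE: "lin_equiv G (bern_div G u e0 {X j'}) (\<lambda>z. bern_div G u e0 {X i} z + dvw n z)
      \<longleftrightarrow> 5 dvd (c j' - c i - n)" if j': "j' \<in> {1..5}" for j'
  proof -
    obtain a1 where a1: "bern_div G u e0 {X j'} Vv - c j' - s = 5 * a1" using H j' by blast
    obtain a2 where a2: "bern_div G u e0 {X i} Vv - c i - s = 5 * a2" using H ij by blast
    have s1: "bern_div G u e0 {X j'} Vv + bern_div G u e0 {X j'} Vw = 4" using H j' by blast
    have s2: "bern_div G u e0 {X i} Vv + bern_div G u e0 {X i} Vw = 4" using H ij by blast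
    have "lin_equiv G (bern_div G u e0 {X j'}) (\<lambda>z. bern_div G u e0 {X i} z + dvw n z) \<longleftrightarrow>
      (\<exists>k. bern_div G u e0 {X i} Vv + n = bern_div G u e0 {X j'} Vv + 5*k \<and>
           bern_div G u e0 {X i} Vw + - n = bern_div G u e0 {X j'} Vw - 5*k)"
      by (simp add: lin_equiv_two[OF two] dvw_def)
    also have "\<dots> \<longleftrightarrow> 5 dvd (c j' - c i - n)"
    proof
      assume "\<exists>k. bern_div G u e0 {X i} Vv + n = bern_div G u e0 {X j'} Vv + 5*k \<and>
           bern_div G u e0 {X i} Vw + - n = bern_div G u e0 {X j'} Vw - 5*k"
      then obtain k where k: "bern_div G u e0 {X i} Vv + n = bern_div G u e0 {X j'} Vv + 5*k" by blast
      have "c j' - c i - n = 5 * (a2 - a1 - k)" using k a1 a2 by (simp add: algebra_simps)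
      then show "5 dvd (c j' - c i - n)" by simp
    next
      assume "5 dvd (c j' - c i - n)"
      then obtain m where m: "c j' - c i - n = 5 * m" by blast
      show "\<exists>k. bern_div G u e0 {X i} Vv + n = bern_div G u e0 {X j'} Vv + 5*k \<and>
           bern_div G u e0 {X i} Vw + - n = bern_div G u e0 {X j'} Vw - 5*k"
        using m a1 a2 s1 s2 by (intro exI[of _ "a2 - a1 - m"]) (simp add: algebra_simps)
    qed
    finally show ?thesis .
  qed
  have ST: "spanning_trees G = {{X j} | j. j \<in> {1..5}}" by (rule spanning_two[OF two])
  show ?thesis unfolding bernardi_def
  proof (rule the_equality)
    show "{X j} \<in> spanning_trees G \<and>
      lin_equiv G (bern_div G u e0 {X j}) (\<lambda>z. bern_div G u e0 {X i} z + dvw n z)"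
      using ST ij LE[OF ij(2)] d by blast
  next
    fix T' assume T': "T' \<in> spanning_trees G \<and>
      lin_equiv G (bern_div G u e0 T') (\<lambda>z. bern_div G u e0 {X i} z + dvw n z)"
    then obtain j' where j': "j' \<in> {1..5}" "T' = {X j'}" using ST by blast
    then have "5 dvd (c j' - c i - n)" using LE[OF j'(1)] T' by blast
    then have "5 dvd ((c j' - c i - n) - (c j - c i - n))" using d by (rule dvd_diff)
    then have "5 dvd (c j' - c j)" by simp
    then have "j' = j" using I j'(1) ij(2) by blast
    then show "T' = {X j}" using j' by simp
  qed
qed

lemma surj_c:
  assumes "\<forall>m. 0 \<le> m \<and> m < 5 \<longrightarrow> (\<exists>j\<in>{1..5::nat}. c j = (m::int))"
  shows "\<exists>j\<in>{1..5}. 5 dvd (c j - a)"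
proof -
  have "0 \<le> a mod 5 \<and> a mod 5 < 5" by simp
  then obtain j where j: "j \<in> {1..5}" "c j = a mod 5" using assms by blast
  have "c j - a = 5 * (- (a div 5))" using j(2) minus_mult_div_eq_mod[of a 5] by simp
  then show ?thesis using j(1) by (metis dvd_triv_left)
qed

lemma int04: "0 \<le> (m::int) \<and> m < 5 \<longleftrightarrow> m = 0 \<or> m = 1 \<or> m = 2 \<or> m = 3 \<or> m = 4"
  by auto

lemma bex15: "(\<exists>j\<in>{1..5::nat}. P j) \<longleftrightarrow> P 1 \<or> P 2 \<or> P 3 \<or> P 4 \<or> P 5"
proof -
  have "{1..5::nat} = {1,2,3,4,5}" by auto
  then show ?thesis by simp
qed

lemma c0_surj: "u \<in> {Vv, Vw} \<Longrightarrow> \<forall>m. 0 \<le> m \<and> m < 5 \<longrightarrow> (\<exists>j\<in>{1..5::nat}. c0 u j = m)"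
  unfolding int04 bex15 by (auto simp: c0_def)

lemma c0_inj: "u \<in> {Vv, Vw} \<Longrightarrow> \<forall>j\<in>{1..5}. \<forall>j'\<in>{1..5}. 5 dvd (c0 u j - c0 u j') \<longrightarrow> j = j'"
  unfolding ball15 by (auto simp: c0_def)

lemma c1_inj: "u \<in> {Vv, Vw} \<Longrightarrow> \<forall>j\<in>{1..5}. \<forall>j'\<in>{1..5}. 5 dvd (c1 u j - c1 u j') \<longrightarrow> j = j'"
  unfolding ball15 by (auto simp: c1_def)

lemma c01_rel: "u \<in> {Vv, Vw} \<Longrightarrow> \<forall>j\<in>{1..5}. 5 dvd (c1 u j - 2 * c0 u j - (if u = Vv then 0 else 1))"
  unfolding ball15 by (auto simp: c0_def c1_def)

lemma phi_single [simp]: "phi {A j} = {B j}"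
  by (simp add: phi_def)

lemma H_G0: "u \<in> {Vv, Vw} \<Longrightarrow> e0 \<in> edges G0 \<Longrightarrow> \<exists>s. \<forall>j\<in>{1..5}. 5 dvd (bern_div G0 u e0 {A j} Vv - c0 u j - s) \<and>
   bern_div G0 u e0 {A j} Vv + bern_div G0 u e0 {A j} Vw = 4"
  using H_G0_v H_G0_w by blast

lemma H_G1: "u \<in> {Vv, Vw} \<Longrightarrow> e0 \<in> edges G1 \<Longrightarrow> \<exists>s. \<forall>j\<in>{1..5}. 5 dvd (bern_div G1 u e0 {B j} Vv - c1 u j - s) \<and>
   bern_div G1 u e0 {B j} Vv + bern_div G1 u e0 {B j} Vw = 4"
  using H_G1_v H_G1_w by blast

lemma bern_main:
  assumes u: "u \<in> {Vv, Vw}" and e: "e0 \<in> edges G0" "e1 \<in> edges G1" and i: "i \<in> {1..5}"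
  shows "phi (bernardi G0 u e0 (dvw n) {A i}) = bernardi G1 u e1 (dvw (2 * n)) {B i}"
proof -
  obtain j where j: "j \<in> {1..5}" "5 dvd (c0 u j - (c0 u i + n))"
    using surj_c[OF c0_surj[OF u]] by blast
  have d0: "5 dvd (c0 u j - c0 u i - n)" using j(2) by (simp add: algebra_simps)
  obtain s0 where s0: "\<forall>j\<in>{1..5}. 5 dvd (bern_div G0 u e0 {A j} Vv - c0 u j - s0) \<and>
   bern_div G0 u e0 {A j} Vv + bern_div G0 u e0 {A j} Vw = 4" using H_G0[OF u e(1)] by blast
  obtain s1 where s1: "\<forall>j\<in>{1..5}. 5 dvd (bern_div G1 u e1 {B j} Vv - c1 u j - s1) \<and>
   bern_div G1 u e1 {B j} Vv + bern_div G1 u e1 {B j} Vw = 4" using H_G1[OF u e(2)] by blast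
  have b0: "bernardi G0 u e0 (dvw n) {A i} = {A j}"
    by (rule bern_two[OF two_G0 s0 c0_inj[OF u] i j(1) d0])
  let ?k = "if u = Vv then 0 else 1 :: int"
  have r1: "5 dvd (c1 u j - 2 * c0 u j - ?k)" using c01_rel[OF u] j(1) by blast
  have r2: "5 dvd (c1 u i - 2 * c0 u i - ?k)" using c01_rel[OF u] i by blast
  have "5 dvd ((c1 u j - 2 * c0 u j - ?k) - (c1 u i - 2 * c0 u i - ?k) + 2 * (c0 u j - c0 u i - n))"
    using dvd_add[OF dvd_diff[OF r1 r2] dvd_mult[OF d0, of 2]] .
  then have d1: "5 dvd (c1 u j - c1 u i - 2 * n)" by (simp add: algebra_simps)
  have b1: "bernardi G1 u e1 (dvw (2 * n)) {B i} = {B j}"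
    by (rule bern_two[OF two_G1 s1 c1_inj[OF u] i j(1) d1])
  show ?thesis using b0 b1 by simp
qed

lemma fp2: "(f^^2) x = f (f x)" by (simp add: numeral_eq_Suc)
lemma fp3: "(f^^3) x = f (f (f x))" by (simp add: numeral_eq_Suc)
lemma fp4: "(f^^4) x = f (f (f (f x)))" by (simp add: numeral_eq_Suc)
lemma fp5: "(f^^5) x = f (f (f (f (f x))))" by (simp add: numeral_eq_Suc)

lemma rotor_main:
  assumes u: "u \<in> {Vv, Vw}" and i: "i \<in> {1..5}"
  shows "phi (rotor_route G0 u (dvw n) {A i}) = rotor_route G1 u (dvw (2 * n)) {B i}"
proof -
  let ?x = "if u = Vv then Vw else Vv"
  have p0: "(nxt G0 ?x ^^ 5) (A i) = A i" using u i unfolding in15 fp5 by auto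
  have p1: "(nxt G1 ?x ^^ 5) (B i) = B i" using u i unfolding in15 fp5 by auto
  have r0: "rotor_route G0 u (dvw n) {A i} = {(nxt G0 ?x ^^ nat (dvw n ?x mod 5)) (A i)}"
    by (rule rotor_two[OF two_G0 u refl i p0])
  have r1: "rotor_route G1 u (dvw (2*n)) {B i} = {(nxt G1 ?x ^^ nat (dvw (2*n) ?x mod 5)) (B i)}"
    by (rule rotor_two[OF two_G1 u refl i p1])
  have m1: "(-n) mod 5 = (- (n mod 5)) mod 5" by (simp add: mod_minus_eq)
  have m2: "(2*n) mod 5 = (2*(n mod 5)) mod 5" by (simp add: mod_mult_right_eq)
  have m3: "(-(2*n)) mod 5 = (-(2*(n mod 5))) mod 5" by (metis mod_minus_eq mod_mult_right_eq)
  have c: "n mod 5 = 0 \<or> n mod 5 = 1 \<or> n mod 5 = 2 \<or> n mod 5 = 3 \<or> n mod 5 = 4"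
    using int04[of "n mod 5"] by simp
  show ?thesis unfolding r0 r1
    using u i c unfolding in15 dvw_def
    by (auto simp: m1 m2 m3 fp2 fp3 fp4 phi_def)
qed

lemma last_itl: "last (itl f h (Suc p)) = (f^^p) h"
  by (simp add: itl_map)

lemma orbit_set:
  assumes "last (itl f h (Suc p)) = h" "0 < p"
  shows "range (\<lambda>k. (f^^k) h) = set (itl f h p)"
proof -
  have per: "(f^^p) h = h" using assms(1) last_itl[of f h p] by metis
  show ?thesis
  proof
    show "range (\<lambda>k. (f^^k) h) \<subseteq> set (itl f h p)"
    proof clarify
      fix k
      have "(f^^k) h = (f^^(k mod p)) h" by (rule funpow_mod[OF per])
      moreover have "k mod p < p" using assms(2) by simp
      ultimately show "(f^^k) h \<in> set (itl f h p)" by (auto simp: itl_map)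
    qed
    show "set (itl f h p) \<subseteq> range (\<lambda>k. (f^^k) h)" by (auto simp: itl_map)
  qed
qed

lemma orbit_same:
  assumes "last (itl f h (Suc p)) = h" "h' \<in> set (itl f h p)"
  shows "range (\<lambda>k. (f^^k) h') = range (\<lambda>k. (f^^k) h)"
proof -
  have per: "(f^^p) h = h" using assms(1) last_itl[of f h p] by metis
  obtain i where i: "i < p" "h' = (f^^i) h" using assms(2) by (auto simp: itl_map)
  show ?thesis
  proof
    show "range (\<lambda>k. (f^^k) h') \<subseteq> range (\<lambda>k. (f^^k) h)"
    proof clarify
      fix k
      have "(f^^k) h' = (f^^(k + i)) h" using i(2) by (simp add: funpow_add)
      then show "(f^^k) h' \<in> range (\<lambda>k. (f^^k) h)" by simp
    qed
    show "range (\<lambda>k. (f^^k) h) \<subseteq> range (\<lambda>k. (f^^k) h')"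
    proof clarify
      fix k
      have "(f^^(k + p - i)) h' = (f^^(k + p - i + i)) h" using i(2) by (simp add: funpow_add)
      also have "k + p - i + i = k + p" using i(1) by simp
      also have "(f^^(k + p)) h = (f^^k) h" using per by (simp add: funpow_add)
      finally show "(f^^k) h \<in> range (\<lambda>k. (f^^k) h')" by (metis rangeI)
    qed
  qed
qed

lemma face_step_simp [simp]: "face_step G (e, x) = (nxt G (other G x e) e, other G x e)"
  by (simp add: face_step_def Let_def)

lemma half_G0: "half_edges G0 = {(A 1,Vv),(A 1,Vw),(A 2,Vv),(A 2,Vw),(A 3,Vv),(A 3,Vw),(A 4,Vv),(A 4,Vw),(A 5,Vv),(A 5,Vw)}"
  by (auto simp: half_edges_def G0_def)
lemma half_G1: "half_edges G1 = {(B 1,Vv),(B 1,Vw),(B 2,Vv),(B 2,Vw),(B 3,Vv),(B 3,Vw),(B 4,Vv),(B 4,Vw),(B 5,Vv),(B 5,Vw)}"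
  by (auto simp: half_edges_def G1_def)

lemma os_G0_A3w: "range (\<lambda>k. (face_step G0 ^^ k) (A 3, Vw)) = range (\<lambda>k. (face_step G0 ^^ k) (A 1, Vv))"
  by (rule orbit_same[where p=6]) simp_all

lemma os_G0_A4v: "range (\<lambda>k. (face_step G0 ^^ k) (A 4, Vv)) = range (\<lambda>k. (face_step G0 ^^ k) (A 1, Vv))"
  by (rule orbit_same[where p=6]) simp_all

lemma os_G0_A1w: "range (\<lambda>k. (face_step G0 ^^ k) (A 1, Vw)) = range (\<lambda>k. (face_step G0 ^^ k) (A 1, Vv))"
  by (rule orbit_same[where p=6]) simp_all

lemma os_G0_A2v: "range (\<lambda>k. (face_step G0 ^^ k) (A 2, Vv)) = range (\<lambda>k. (face_step G0 ^^ k) (A 1, Vv))"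
  by (rule orbit_same[where p=6]) simp_all

lemma os_G0_A5w: "range (\<lambda>k. (face_step G0 ^^ k) (A 5, Vw)) = range (\<lambda>k. (face_step G0 ^^ k) (A 1, Vv))"
  by (rule orbit_same[where p=6]) simp_all

lemma oset_G0_1: "range (\<lambda>k. (face_step G0 ^^ k) (A 1, Vv)) = set (itl (face_step G0) (A 1, Vv) 6)"
  by (rule orbit_set) simp_all

lemma os_G0_A3v: "range (\<lambda>k. (face_step G0 ^^ k) (A 3, Vv)) = range (\<lambda>k. (face_step G0 ^^ k) (A 2, Vw))"
  by (rule orbit_same[where p=2]) simp_all

lemma oset_G0_2: "range (\<lambda>k. (face_step G0 ^^ k) (A 2, Vw)) = set (itl (face_step G0) (A 2, Vw) 2)"
  by (rule orbit_set) simp_all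

lemma os_G0_A5v: "range (\<lambda>k. (face_step G0 ^^ k) (A 5, Vv)) = range (\<lambda>k. (face_step G0 ^^ k) (A 4, Vw))"
  by (rule orbit_same[where p=2]) simp_all

lemma oset_G0_3: "range (\<lambda>k. (face_step G0 ^^ k) (A 4, Vw)) = set (itl (face_step G0) (A 4, Vw) 2)"
  by (rule orbit_set) simp_all

lemma img_G0: "(\<lambda>h. range (\<lambda>k. (face_step G0 ^^ k) h)) ` half_edges G0 = {range (\<lambda>k. (face_step G0 ^^ k) (A 1, Vv)), range (\<lambda>k. (face_step G0 ^^ k) (A 2, Vw)), range (\<lambda>k. (face_step G0 ^^ k) (A 4, Vw))}"
  unfolding half_G0 image_insert image_empty os_G0_A3w os_G0_A4v os_G0_A1w os_G0_A2v os_G0_A5w os_G0_A3v os_G0_A5v by blast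

lemma os_G1_B5w: "range (\<lambda>k. (face_step G1 ^^ k) (B 5, Vw)) = range (\<lambda>k. (face_step G1 ^^ k) (B 1, Vv))"
  by (rule orbit_same[where p=10]) simp_all

lemma os_G1_B3v: "range (\<lambda>k. (face_step G1 ^^ k) (B 3, Vv)) = range (\<lambda>k. (face_step G1 ^^ k) (B 1, Vv))"
  by (rule orbit_same[where p=10]) simp_all

lemma os_G1_B4w: "range (\<lambda>k. (face_step G1 ^^ k) (B 4, Vw)) = range (\<lambda>k. (face_step G1 ^^ k) (B 1, Vv))"
  by (rule orbit_same[where p=10]) simp_all

lemma os_G1_B2v: "range (\<lambda>k. (face_step G1 ^^ k) (B 2, Vv)) = range (\<lambda>k. (face_step G1 ^^ k) (B 1, Vv))"
  by (rule orbit_same[where p=10]) simp_all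

lemma os_G1_B1w: "range (\<lambda>k. (face_step G1 ^^ k) (B 1, Vw)) = range (\<lambda>k. (face_step G1 ^^ k) (B 1, Vv))"
  by (rule orbit_same[where p=10]) simp_all

lemma os_G1_B4v: "range (\<lambda>k. (face_step G1 ^^ k) (B 4, Vv)) = range (\<lambda>k. (face_step G1 ^^ k) (B 1, Vv))"
  by (rule orbit_same[where p=10]) simp_all

lemma os_G1_B2w: "range (\<lambda>k. (face_step G1 ^^ k) (B 2, Vw)) = range (\<lambda>k. (face_step G1 ^^ k) (B 1, Vv))"
  by (rule orbit_same[where p=10]) simp_all

lemma os_G1_B5v: "range (\<lambda>k. (face_step G1 ^^ k) (B 5, Vv)) = range (\<lambda>k. (face_step G1 ^^ k) (B 1, Vv))"
  by (rule orbit_same[where p=10]) simp_all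

lemma os_G1_B3w: "range (\<lambda>k. (face_step G1 ^^ k) (B 3, Vw)) = range (\<lambda>k. (face_step G1 ^^ k) (B 1, Vv))"
  by (rule orbit_same[where p=10]) simp_all

lemma oset_G1_1: "range (\<lambda>k. (face_step G1 ^^ k) (B 1, Vv)) = set (itl (face_step G1) (B 1, Vv) 10)"
  by (rule orbit_set) simp_all

lemma img_G1: "(\<lambda>h. range (\<lambda>k. (face_step G1 ^^ k) h)) ` half_edges G1 = {range (\<lambda>k. (face_step G1 ^^ k) (B 1, Vv))}"
  unfolding half_G1 image_insert image_empty os_G1_B5w os_G1_B3v os_G1_B4w os_G1_B2v os_G1_B1w os_G1_B4v os_G1_B2w os_G1_B5v os_G1_B3w by blast

lemma cyc_G0: "cyc G0 = 3"
proof -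
  let ?O1 = "range (\<lambda>k. (face_step G0 ^^ k) (A 1, Vv))"
  let ?O2 = "range (\<lambda>k. (face_step G0 ^^ k) (A 2, Vw))"
  let ?O3 = "range (\<lambda>k. (face_step G0 ^^ k) (A 4, Vw))"
  have "(A 1, Vv) \<in> ?O1" "(A 2, Vw) \<in> ?O2" by (metis funpow_0 rangeI)+
  moreover have "(A 1, Vv) \<notin> ?O2" "(A 1, Vv) \<notin> ?O3" "(A 2, Vw) \<notin> ?O3"
    unfolding oset_G0_2 oset_G0_3 by simp_all
  ultimately have "?O1 \<noteq> ?O2" "?O1 \<noteq> ?O3" "?O2 \<noteq> ?O3" by auto
  then show ?thesis unfolding cyc_def img_G0 by simp
qed

lemma cyc_G1: "cyc G1 = 1"
  unfolding cyc_def img_G1 by simp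

lemma genus_G0: "genus G0 = 1"
proof -
  have "card (verts G0) = 2" "card (edges G0) = 5"
    using two_card[OF two_G0] by (auto simp: G0_def)
  then show ?thesis unfolding genus_def cyc_G0 by simp
qed

lemma genus_G1: "genus G1 = 2"
proof -
  have "card (verts G1) = 2" "card (edges G1) = 5"
    using two_card[OF two_G1] by (auto simp: G1_def)
  then show ?thesis unfolding genus_def cyc_G1 by simp
qed

theorem proposition3p4:
  shows "(\<forall>u\<in>{Vv, Vw}. \<forall>n :: int. \<forall>T\<in>spanning_trees G0.
            phi (rotor_route G0 u (dvw n) T) = rotor_route G1 u (dvw (2 * n)) (phi T) \<and>
            (\<forall>e0 e1. e0 \<in> edges G0 \<and> u \<in> ends G0 e0 \<and> e1 \<in> edges G1 \<and> u \<in> ends G1 e1 \<longrightarrow>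
               phi (bernardi G0 u e0 (dvw n) T) = bernardi G1 u e1 (dvw (2 * n)) (phi T)))
         \<and> genus G0 = 1 \<and> genus G1 = 2"
proof (intro conjI ballI allI impI genus_G0 genus_G1)
  fix u n T assume u: "u \<in> {Vv, Vw}" and T: "T \<in> spanning_trees G0"
  then obtain i where i: "i \<in> {1..5}" "T = {A i}" using spanning_two[OF two_G0] by blast
  show "phi (rotor_route G0 u (dvw n) T) = rotor_route G1 u (dvw (2 * n)) (phi T)"
    using rotor_main[OF u i(1)] i(2) by simp
  fix e0 e1 assume e: "e0 \<in> edges G0 \<and> u \<in> ends G0 e0 \<and> e1 \<in> edges G1 \<and> u \<in> ends G1 e1"
  show "phi (bernardi G0 u e0 (dvw n) T) = bernardi G1 u e1 (dvw (2 * n)) (phi T)"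
    using bern_main[OF u _ _ i(1)] e i(2) by simp
qed

end
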